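(* Let $b\ge2$ be an integer, $0<\alpha<\tfrac12$, and let $\Phi=\Phi^{\alpha,b}_{\mathcal{G}}\colon\mathbb{S}^1\to\mathbb{R}^d$ be an $\alpha$-bi-Hölder Weierstrass embedding. Let $W\in\mathcal{W}^{\alpha,b}$. Then for $\mathcal{L}^d$-almost every $\mathbf{t}\in\mathbb{R}^d$, the occupation measure $\lambda_{\mathbf{t}}=(W_{\mathbf{t}})_*\mathcal{L}^1$ of $W_{\mathbf{t}}(x)=W(x)+\langle\mathbf{t},\Phi(x)\rangle$ is absolutely continuous with respect to Lebesgue measure, with a bounded and continuous density.
   Context: $\mathbb{S}^1$ is identified with $\mathbb{R}/\mathbb{Z}$, i.e. with $[0,1)$ carrying Lebesgue measure $\mathcal{L}^1$. For an integer $b\ge2$, $0<\alpha<1$ and a Lipschitz $g\colon\mathbb{S}^1\to\mathbb{R}$, $W_g^{\alpha,b}(x)=\sum_{k=0}^\infty b^{-\alpha k}g(b^kx)$; $\mathcal{W}^{\alpha,b}$ is the family of all such functions. For $\mathcal{G}=\{g_0,\dots,g_{d-1}\}$ Lipschitz on $\mathbb{S}^1$, $\Phi^{\alpha,b}_{\mathcal{G}}(x)=(W^{\alpha,b}_{g_0}(x),\dots,W^{\alpha,b}_{g_{d-1}}(x))$. $\Phi$ is $\alpha$-bi-Hölder if $c_1|x-y|^\alpha\le\|\Phi(x)-\Phi(y)\|\le c_2|x-y|^\alpha$ for all $x,y$, with constants $c_1,c_2>0$ and $\|\cdot\|$ the $\ell^\infty$ norm. *)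

theory Defs
  imports "HOL-Analysis.Analysis"
begin

text \<open>The circle S^1 = R/Z is modelled by 1-periodic functions on the reals;
  points of S^1 are represented by reals, with the quotient (circle) distance.\<close>

definition periodic1 :: "(real \<Rightarrow> 'a) \<Rightarrow> bool" where
  "periodic1 g \<longleftrightarrow> (\<forall>x. g (x + 1) = g x)"

text \<open>A Lipschitz function on S^1 (for 1-periodic functions, Lipschitz for the
  circle distance is the same as Lipschitz on the reals).\<close>
definition lipschitz_S1 :: "(real \<Rightarrow> real) \<Rightarrow> bool" where
  "lipschitz_S1 g \<longleftrightarrow> periodic1 g \<and> (\<exists>C. C-lipschitz_on UNIV g)"

definition dist_S1 :: "real \<Rightarrow> real \<Rightarrow> real" where
  "dist_S1 x y = min (frac (x - y)) (1 - frac (x - y))"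

definition weierstrass :: "real \<Rightarrow> nat \<Rightarrow> (real \<Rightarrow> real) \<Rightarrow> real \<Rightarrow> real" where
  "weierstrass \<alpha> b g x = (\<Sum>k. (real b) powr (- \<alpha> * real k) * g ((real b) ^ k * x))"

text \<open>The vector-valued Weierstrass map Phi_G = (W_{g_0}, ..., W_{g_{d-1}}),
  with the coordinates indexed by a finite type 'd (so d = CARD('d)).\<close>
definition weierstrass_map ::
    "real \<Rightarrow> nat \<Rightarrow> ('d::finite \<Rightarrow> real \<Rightarrow> real) \<Rightarrow> real \<Rightarrow> real ^ 'd" where
  "weierstrass_map \<alpha> b G x = (\<chi> i. weierstrass \<alpha> b (G i) x)"

definition linf_norm :: "real ^ 'd::finite \<Rightarrow> real" where
  "linf_norm v = Max (range (\<lambda>i. \<bar>v $ i\<bar>))"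

definition bi_holder :: "real \<Rightarrow> (real \<Rightarrow> real ^ 'd::finite) \<Rightarrow> bool" where
  "bi_holder \<alpha> \<Phi> \<longleftrightarrow> (\<exists>c1 c2. c1 > 0 \<and> c2 > 0 \<and>
     (\<forall>x y. c1 * dist_S1 x y powr \<alpha> \<le> linf_norm (\<Phi> x - \<Phi> y) \<and>
            linf_norm (\<Phi> x - \<Phi> y) \<le> c2 * dist_S1 x y powr \<alpha>))"

end

theory Submission
  imports Defs "HOL-Probability.Probability"
begin

lemma periodic1_int:
  assumes "periodic1 g" shows "g (x + real_of_int n) = g x"
proof (induction n rule: int_induct[where k=0])
  case base then show ?case by simp
next
  case (step1 i)
  have "g (x + real_of_int (i+1)) = g ((x + real_of_int i) + 1)" by (simp add: add.assoc)
  also have "\<dots> = g (x + real_of_int i)" using assms unfolding periodic1_def by blast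
  finally show ?case using step1 by simp
next
  case (step2 i)
  have "g (x + real_of_int i) = g ((x + real_of_int (i - 1)) + 1)" by (simp add: add.assoc)
  also have "\<dots> = g (x + real_of_int (i-1))" using assms unfolding periodic1_def by blast
  finally show ?case using step2 by simp
qed

lemma lipschitz_S1_cont:
  assumes "lipschitz_S1 g" shows "continuous_on UNIV g"
  using assms lipschitz_on_continuous_on unfolding lipschitz_S1_def by blast

lemma lipschitz_S1_bounded:
  assumes "lipschitz_S1 g" shows "\<exists>B. \<forall>x. \<bar>g x\<bar> \<le> B"
proof -
  have "compact (g ` {0..1})"
    using lipschitz_S1_cont[OF assms]
    by (intro compact_continuous_image) (auto intro: continuous_on_subset)
  then obtain B where B: "\<And>y. y \<in> g ` {0..1} \<Longrightarrow> norm y \<le> B"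
    using compact_imp_bounded bounded_iff by metis
  have "\<bar>g x\<bar> \<le> B" for x
  proof -
    have "g x = g (frac x + real_of_int \<lfloor>x\<rfloor>)" by (simp add: frac_def)
    also have "\<dots> = g (frac x)" using periodic1_int assms unfolding lipschitz_S1_def by blast
    finally show ?thesis using B[of "g (frac x)"] frac_lt_1[of x] frac_ge_0[of x] by auto
  qed
  then show ?thesis by blast
qed

lemma weierstrass_cont:
  assumes "lipschitz_S1 g" "b \<ge> 2" "\<alpha> > 0"
  shows "continuous_on UNIV (weierstrass \<alpha> b g)"
proof -
  obtain B where B: "\<And>x. \<bar>g x\<bar> \<le> B" using lipschitz_S1_bounded[OF assms(1)] by blast
  define r where "r = real b powr (-\<alpha>)"
  have r: "0 < r" "r < 1" using assms unfolding r_def by (auto intro!: powr_less_one)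
  have pw: "real b powr (- \<alpha> * real k) = r ^ k" for k
    unfolding r_def using assms by (simp add: powr_realpow[symmetric] powr_powr mult.commute)
  have ul: "uniform_limit UNIV (\<lambda>n x. \<Sum>i<n. real b powr (- \<alpha> * real i) * g (real b ^ i * x))
     (\<lambda>x. suminf (\<lambda>i. real b powr (- \<alpha> * real i) * g (real b ^ i * x))) sequentially"
  proof (rule Weierstrass_m_test)
    show "norm (real b powr (- \<alpha> * real n) * g (real b ^ n * x)) \<le> B * r ^ n" for n x
      using B[of "real b ^ n * x"] r unfolding pw by (simp add: abs_mult mult.commute mult_left_mono)
    show "summable (\<lambda>n. B * r ^ n)" using r by (intro summable_mult summable_geometric) auto
  qed
  have cg: "continuous_on UNIV g" by (rule lipschitz_S1_cont[OF assms(1)])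
  show ?thesis unfolding weierstrass_def[abs_def]
    by (rule uniform_limit_theorem[OF _ ul])
       (auto intro!: always_eventually continuous_intros continuous_on_compose2[OF cg])
qed


lemma integrable_ind_ioo: "integrable lborel (\<lambda>s::real. indicator {a<..<b} s * (B::real))"
proof -
  have "integrable lborel (indicator {a<..<b} :: real \<Rightarrow> real)"
    by (subst integrable_indicator_iff) (cases "a \<le> b", auto)
  then show ?thesis by (intro integrable_mult_left)
qed

lemma inversion_interval:
  fixes M :: "real measure"
  assumes M: "real_distribution M" and int: "integrable lborel (char M)"
    and ab: "a \<le> b" "measure M {a} = 0" "measure M {b} = 0"
  shows "complex_of_real (measure M {a<..b}) =
     (CLINT s|lborel. indicator {a<..<b} s *\<^sub>R (CLINT \<xi>|lborel. iexp (-(\<xi> * s)) * char M \<xi>)) / (2*pi)"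
proof -
  interpret real_distribution M by fact
  define \<phi> where "\<phi> = char M"
  have \<phi>m[measurable]: "\<phi> \<in> borel_measurable borel" unfolding \<phi>_def by simp
  have int\<phi>: "integrable lborel \<phi>" using int unfolding \<phi>_def .
  define F where "F \<xi> = (iexp (-(\<xi> * a)) - iexp (-(\<xi> * b))) / (\<i> * \<xi>)" for \<xi> :: real
  have Fm[measurable]: "F \<in> borel_measurable borel" unfolding F_def by measurable
  have Fb: "norm (F \<xi>) \<le> b - a" for \<xi>
  proof (cases "\<xi> = 0")
    case True then show ?thesis using ab by (simp add: F_def)
  next
    case False
    have "F \<xi> = (iexp ((-\<xi>) * b) - iexp ((-\<xi>) * a)) / (\<i> * (-\<xi>))"
      unfolding F_def using False by (simp add: field_simps)
    then show ?thesis using Levy_Inversion_aux2[OF ab(1), of "-\<xi>"] False by simp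
  qed
  have lim1: "(\<lambda>T::nat. complex_of_real (1 / (2 * pi)) *
       (CLBINT t=ereal (real_of_int (- int T))..ereal (real T). F t * \<phi> t))
     \<longlonglongrightarrow> complex_of_real (measure M {a<..b})"
    using Levy_Inversion[OF ab] unfolding F_def \<phi>_def by simp
  have lim2: "(\<lambda>T::nat. (CLBINT t=ereal (real_of_int (- int T))..ereal (real T). F t * \<phi> t))
     \<longlonglongrightarrow> (CLINT t|lborel. F t * \<phi> t)"
  proof -
    have eq: "(CLBINT t=ereal (real_of_int (- int T))..ereal (real T). F t * \<phi> t) =
       (CLINT t|lborel. indicator {- real T<..<real T} t *\<^sub>R (F t * \<phi> t))" for T :: nat
      by (simp add: interval_lebesgue_integral_def set_lebesgue_integral_def einterval_eq)
    have "(\<lambda>T::nat. CLINT t|lborel. indicator {- real T<..<real T} t *\<^sub>R (F t * \<phi> t))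
       \<longlonglongrightarrow> (CLINT t|lborel. F t * \<phi> t)"
    proof (rule integral_dominated_convergence[where w="\<lambda>t. (b - a) * norm (\<phi> t)"])
      show "integrable lborel (\<lambda>t. (b - a) * norm (\<phi> t))" using int\<phi> by auto
      show "AE x in lborel. norm (indicator {- real T<..<real T} x *\<^sub>R (F x * \<phi> x)) \<le> (b - a) * norm (\<phi> x)" for T
        using Fb ab(1) by (auto simp: norm_mult intro!: mult_right_mono split: split_indicator)
      show "AE x in lborel. (\<lambda>T::nat. indicator {- real T<..<real T} x *\<^sub>R (F x * \<phi> x)) \<longlonglongrightarrow> F x * \<phi> x"
      proof (rule AE_I2, rule tendsto_eventually)
        fix x :: real
        obtain N :: nat where N: "\<bar>x\<bar> < real N" using reals_Archimedean2 by blast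
        show "\<forall>\<^sub>F T in sequentially. indicator {- real T<..<real T} x *\<^sub>R (F x * \<phi> x) = F x * \<phi> x"
          unfolding eventually_sequentially
          using N by (intro exI[of _ N]) (auto simp: indicator_def)
      qed
    qed auto
    then show ?thesis unfolding eq .
  qed
  have lim3: "(\<lambda>T::nat. complex_of_real (1 / (2 * pi)) *
       (CLBINT t=ereal (real_of_int (- int T))..ereal (real T). F t * \<phi> t))
     \<longlonglongrightarrow> complex_of_real (1 / (2 * pi)) * (CLINT t|lborel. F t * \<phi> t)"
    by (intro tendsto_mult tendsto_const lim2)
  have meq: "complex_of_real (measure M {a<..b}) = complex_of_real (1 / (2 * pi)) * (CLINT t|lborel. F t * \<phi> t)"
    using LIMSEQ_unique[OF lim1 lim3] .
  define H where "H = (\<lambda>(\<xi>::real, s::real). indicator {a<..<b} s *\<^sub>R (iexp (-(\<xi> * s)) * \<phi> \<xi>))"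
  have Hm[measurable]: "H \<in> borel_measurable (lborel \<Otimes>\<^sub>M lborel)" unfolding H_def by measurable
  have P: "pair_sigma_finite lborel lborel" ..
  have Fint: "F \<xi> = (CLINT s|lborel. indicator {a<..<b} s *\<^sub>R iexp (-(\<xi> * s)))" if "\<xi> \<noteq> 0" for \<xi>
  proof -
    have "(CLBINT s=a..b. iexp (-(\<xi> * s))) = (\<i> * iexp (-(\<xi>*b)) / \<xi>) - (\<i> * iexp (-(\<xi>*a)) / \<xi>)"
    proof (rule interval_integral_FTC_finite)
      show "continuous_on {min a b..max a b} (\<lambda>s. iexp (- (\<xi> * s)))" by (intro continuous_intros)
      show "((\<lambda>s. \<i> * iexp (-(\<xi> * s)) / \<xi>) has_vector_derivative iexp (- (\<xi> * x))) (at x within {min a b..max a b})" for x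
        using that
        by (auto intro!: derivative_eq_intros simp: has_vector_derivative_complex_iff Re_exp Im_exp field_simps)
    qed
    also have "\<dots> = F \<xi>" unfolding F_def using that by (simp add: field_simps)
    finally show ?thesis using ab by (simp add: interval_lebesgue_integral_def set_lebesgue_integral_def einterval_eq)
  qed
  have "(CLINT t|lborel. F t * \<phi> t) = (CLINT \<xi>|lborel. CLINT s|lborel. H (\<xi>, s))"
  proof (rule integral_cong_AE)
    show "AE \<xi> in lborel. F \<xi> * \<phi> \<xi> = (CLINT s|lborel. H (\<xi>, s))"
      using AE_lborel_singleton[of 0]
    proof eventually_elim
      case (elim \<xi>)
      have "F \<xi> * \<phi> \<xi> = (CLINT s|lborel. indicator {a<..<b} s *\<^sub>R iexp (-(\<xi> * s))) * \<phi> \<xi>"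
        using Fint[OF elim] by simp
      also have "\<dots> = (CLINT s|lborel. H (\<xi>, s))"
        unfolding H_def by (simp flip: integral_mult_left_zero)
      finally show ?case .
    qed
  qed auto
  also have "\<dots> = (CLINT s|lborel. CLINT \<xi>|lborel. H (\<xi>, s))"
  proof (rule pair_sigma_finite.Fubini_integral[OF P, symmetric])
    show "integrable (lborel \<Otimes>\<^sub>M lborel) (\<lambda>(x, y). H (x, y))"
    proof (rule pair_sigma_finite.Fubini_integrable[OF P])
      have "(LINT s|lborel. norm (H (\<xi>, s))) = (b - a) * norm (\<phi> \<xi>)" for \<xi>
      proof -
        have "(LINT s|lborel. norm (H (\<xi>, s))) = (LINT s|lborel. indicator {a<..<b} s * norm (\<phi> \<xi>))"
          unfolding H_def by (intro Bochner_Integration.integral_cong) (auto simp: norm_mult split: split_indicator)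
        also have "\<dots> = (b - a) * norm (\<phi> \<xi>)" using ab by simp
        finally show ?thesis .
      qed
      then show "integrable lborel (\<lambda>\<xi>. LINT s|lborel. norm (case (\<xi>, s) of (x, y) \<Rightarrow> H (x, y)))"
        using int\<phi> by simp
      show "AE \<xi> in lborel. integrable lborel (\<lambda>s. case (\<xi>, s) of (x, y) \<Rightarrow> H (x, y))"
      proof (rule AE_I2)
        fix \<xi>
        show "integrable lborel (\<lambda>s. case (\<xi>, s) of (x, y) \<Rightarrow> H (x, y))"
        proof (rule Bochner_Integration.integrable_bound[OF integrable_ind_ioo[of a b "norm (\<phi> \<xi>)"]])
          show "(\<lambda>s. case (\<xi>, s) of (x, y) \<Rightarrow> H (x, y)) \<in> borel_measurable lborel" by simp
          show "AE s in lborel. norm (case (\<xi>, s) of (x, y) \<Rightarrow> H (x, y)) \<le> norm (indicator {a<..<b} s * norm (\<phi> \<xi>))"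
            unfolding H_def by (auto simp: norm_mult split: split_indicator)
        qed
      qed
    qed (simp add: split_beta')
  qed
  also have "\<dots> = (CLINT s|lborel. indicator {a<..<b} s *\<^sub>R (CLINT \<xi>|lborel. iexp (-(\<xi> * s)) * \<phi> \<xi>))"
    unfolding H_def by (simp add: split_beta')
  finally show ?thesis using meq unfolding \<phi>_def by simp
qed

lemma inversion:
  fixes M :: "real measure"
  assumes M: "real_distribution M" and int: "integrable lborel (char M)"
  shows "\<exists>f. (\<forall>s. f s \<ge> 0) \<and> continuous_on UNIV f \<and> bounded (range f) \<and>
             M = density lborel (\<lambda>s. ennreal (f s))"
proof -
  interpret real_distribution M by fact
  define \<phi> where "\<phi> = char M"
  have \<phi>m[measurable]: "\<phi> \<in> borel_measurable borel" unfolding \<phi>_def by simp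
  have int\<phi>: "integrable lborel \<phi>" using int unfolding \<phi>_def .
  define fc where "fc s = (CLINT \<xi>|lborel. iexp (-(\<xi> * s)) * \<phi> \<xi>)" for s
  define f where "f s = Re (fc s) / (2*pi)" for s
  have cont_fc: "isCont fc s" for s
    unfolding continuous_at_sequentially comp_def fc_def
  proof safe
    fix X assume X: "X \<longlonglongrightarrow> s"
    show "(\<lambda>n. CLINT \<xi>|lborel. iexp (-(\<xi> * X n)) * \<phi> \<xi>) \<longlonglongrightarrow> (CLINT \<xi>|lborel. iexp (-(\<xi> * s)) * \<phi> \<xi>)"
      by (rule integral_dominated_convergence[where w="\<lambda>\<xi>. norm (\<phi> \<xi>)"])
         (auto intro!: tendsto_intros X int\<phi> simp: norm_mult norm_exp_i_times)
  qed
  have contf: "continuous_on UNIV f"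
  proof (intro continuous_at_imp_continuous_on ballI)
    fix s :: real
    show "isCont f s" unfolding f_def
      by (rule continuous_divide[OF continuous_Re[OF cont_fc] continuous_const]) simp
  qed
  have fm[measurable]: "f \<in> borel_measurable borel" by (rule borel_measurable_continuous_onI[OF contf])
  define B where "B = (LINT \<xi>|lborel. norm (\<phi> \<xi>)) / (2*pi)"
  have fcB: "norm (fc s) \<le> 2 * pi * B" for s
  proof -
    have "norm (fc s) \<le> (LINT \<xi>|lborel. norm (iexp (-(\<xi> * s)) * \<phi> \<xi>))" unfolding fc_def by (rule integral_norm_bound)
    also have "\<dots> = (LINT \<xi>|lborel. norm (\<phi> \<xi>))" by (simp add: norm_mult norm_exp_i_times)
    finally show ?thesis unfolding B_def by simp
  qed
  have fB: "\<bar>f s\<bar> \<le> B" for s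
  proof -
    have "\<bar>f s\<bar> = \<bar>Re (fc s)\<bar> / (2*pi)" unfolding f_def by simp
    also have "\<dots> \<le> (2*pi*B) / (2*pi)"
      by (intro divide_right_mono order_trans[OF abs_Re_le_cmod fcB]) simp
    also have "\<dots> = B" by simp
    finally show ?thesis .
  qed
  have B0: "0 \<le> B" using fB[of 0] by simp
  have intf: "integrable lborel (\<lambda>s. indicator {a<..<b} s * f s)" for a b
  proof (rule Bochner_Integration.integrable_bound[OF integrable_ind_ioo[of a b B]])
    show "(\<lambda>s. indicator {a<..<b} s * f s) \<in> borel_measurable lborel" by measurable
    have "norm (indicator {a<..<b} s * f s) \<le> norm (indicator {a<..<b} s * B)" for s :: real
      using fB[of s] B0 by (cases "s \<in> {a<..<b}") simp_all
    then show "AE s in lborel. norm (indicator {a<..<b} s * f s) \<le> norm (indicator {a<..<b} s * B)"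
      by (intro AE_I2)
  qed
  have intB: "(LINT s|lborel. indicator {a<..<b} s * f s) \<le> B * (b - a)" if "a \<le> b" for a b
  proof -
    have "indicator {a<..<b} s * f s \<le> indicator {a<..<b} s * B" for s :: real
      using fB[of s] by (cases "s \<in> {a<..<b}") simp_all
    then have "(LINT s|lborel. indicator {a<..<b} s * f s) \<le> (LINT s|lborel. indicator {a<..<b} s * B)"
      by (intro integral_mono intf integrable_ind_ioo)
    also have "\<dots> = B * (b - a)" using that by simp
    finally show ?thesis .
  qed
  have intv: "measure M {a<..b} = (LINT s|lborel. indicator {a<..<b} s * f s)"
    if ab: "a \<le> b" "measure M {a} = 0" "measure M {b} = 0" for a b
  proof -
    have intc: "integrable lborel (\<lambda>s. indicator {a<..<b} s *\<^sub>R fc s)"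
    proof (rule Bochner_Integration.integrable_bound[OF integrable_ind_ioo[of a b "2*pi*B"]])
      have "continuous_on UNIV fc" by (intro continuous_at_imp_continuous_on ballI cont_fc)
      then have [measurable]: "fc \<in> borel_measurable borel" by (rule borel_measurable_continuous_onI)
      show "(\<lambda>s. indicator {a<..<b} s *\<^sub>R fc s) \<in> borel_measurable lborel" by measurable
      have "norm (indicator {a<..<b} s *\<^sub>R fc s) \<le> norm (indicator {a<..<b} s * (2*pi*B))" for s :: real
        using fcB[of s] B0 by (cases "s \<in> {a<..<b}") simp_all
      then show "AE s in lborel. norm (indicator {a<..<b} s *\<^sub>R fc s) \<le> norm (indicator {a<..<b} s * (2*pi*B))"
        by (intro AE_I2)
    qed
    have "complex_of_real (measure M {a<..b}) = (CLINT s|lborel. indicator {a<..<b} s *\<^sub>R fc s) / (2*pi)"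
      using inversion_interval[OF M int ab] unfolding fc_def \<phi>_def .
    then have "measure M {a<..b} = Re (CLINT s|lborel. indicator {a<..<b} s *\<^sub>R fc s) / (2*pi)"
      by (metis Re_complex_of_real Re_divide_of_real)
    also have "Re (CLINT s|lborel. indicator {a<..<b} s *\<^sub>R fc s) = (LINT s|lborel. Re (indicator {a<..<b} s *\<^sub>R fc s))"
      by (rule integral_bounded_linear[OF bounded_linear_Re intc, symmetric])
    also have "\<dots> / (2*pi) = (LINT s|lborel. Re (indicator {a<..<b} s *\<^sub>R fc s) / (2*pi))"
      by simp
    also have "\<dots> = (LINT s|lborel. indicator {a<..<b} s * f s)"
      unfolding f_def by (intro Bochner_Integration.integral_cong) (auto split: split_indicator)
    finally show ?thesis .
  qed
  have atom: "measure M {c} = 0" for c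
  proof -
    define A where "A = {x. measure M {x} > 0}"
    have cA: "countable A" unfolding A_def by (rule countable_atoms)
    have le: "measure M {c} \<le> 2 * B * e" if e: "e > 0" for e
    proof -
      obtain a where a: "a \<in> {c - e<..<c}" "a \<notin> A"
        using real_interval_avoid_countable_set[of "c - e" c A] cA e by auto
      obtain b where b: "b \<in> {c<..<c + e}" "b \<notin> A"
        using real_interval_avoid_countable_set[of c "c + e" A] cA e by auto
      have ma: "measure M {a} = 0" "measure M {b} = 0"
        using a b measure_nonneg[of M "{a}"] measure_nonneg[of M "{b}"] unfolding A_def by auto
      have "measure M {c} \<le> measure M {a<..b}"
        using a b by (intro finite_measure_mono) auto
      also have "\<dots> = (LINT s|lborel. indicator {a<..<b} s * f s)"
        using intv[of a b] ma a b by auto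
      also have "\<dots> \<le> B * (b - a)" using intB[of a b] a b by auto
      also have "\<dots> \<le> B * (2 * e)" using a b B0 by (intro mult_left_mono) auto
      finally show ?thesis by simp
    qed
    have "measure M {c} \<le> 0"
    proof (rule field_le_epsilon)
      fix e :: real assume e: "0 < e"
      have "measure M {c} \<le> 2 * B * (e / (2 * B + 1))" using le[of "e / (2 * B + 1)"] e B0 by simp
      also have "\<dots> \<le> e" using e B0 by (simp add: field_simps)
      finally show "measure M {c} \<le> 0 + e" by simp
    qed
    then show ?thesis using measure_nonneg[of M "{c}"] by linarith
  qed
  have intv': "measure M {a<..b} = (LINT s|lborel. indicator {a<..<b} s * f s)" if "a \<le> b" for a b
    using intv[OF that atom atom] .
  have fnn: "f s \<ge> 0" for s
  proof (rule ccontr)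
    assume "\<not> f s \<ge> 0"
    then have fs: "f s < 0" by simp
    obtain d where d: "d > 0" "\<And>y. dist y s < d \<Longrightarrow> dist (f y) (f s) < - f s / 2"
      using contf fs unfolding continuous_on_iff by (metis UNIV_I neg_0_less_iff_less half_gt_zero)
    define a where "a = s - d / 2"
    have as: "a \<le> s" using d unfolding a_def by simp
    have "(LINT y|lborel. indicator {a<..<s} y * f y) \<le> (LINT y|lborel. indicator {a<..<s} y * (f s / 2))"
    proof (intro integral_mono intf integrable_ind_ioo)
      fix y
      show "indicator {a<..<s} y * f y \<le> indicator {a<..<s} y * (f s / 2)"
      proof (cases "y \<in> {a<..<s}")
        case True
        then have "dist y s < d" unfolding a_def dist_real_def using d by auto
        then have "dist (f y) (f s) < - f s / 2" by (rule d(2))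
        then show ?thesis using True unfolding dist_real_def by auto
      qed auto
    qed
    also have "\<dots> = f s / 2 * (s - a)" using as by simp
    also have "\<dots> < 0" using fs d unfolding a_def by (simp add: mult_neg_pos)
    finally show False using intv'[OF as] measure_nonneg[of M "{a<..s}"] by linarith
  qed
  have "M = density lborel (\<lambda>s. ennreal (f s))"
  proof (rule measure_eqI_generator_eq[where \<Omega>=UNIV and E="range (\<lambda>(a, b). {a<..b::real})"
        and A="\<lambda>i. {- real i<..real i}"])
    fix X assume "X \<in> range (\<lambda>(a, b). {a<..b::real})"
    then obtain a b where X: "X = {a<..b}" by auto
    show "emeasure M X = emeasure (density lborel (\<lambda>s. ennreal (f s))) X"
    proof (cases "a \<le> b")
      case True
      have "emeasure (density lborel (\<lambda>s. ennreal (f s))) X = (\<integral>\<^sup>+ s. ennreal (f s) * indicator {a<..b} s \<partial>lborel)"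
        unfolding X by (rule emeasure_density) auto
      also have "\<dots> = (\<integral>\<^sup>+ s. ennreal (indicator {a<..<b} s * f s) \<partial>lborel)"
        using AE_lborel_singleton[of b]
        by (intro nn_integral_cong_AE) (auto elim!: eventually_mono split: split_indicator)
      also have "\<dots> = ennreal (LINT s|lborel. indicator {a<..<b} s * f s)"
        by (intro nn_integral_eq_integral intf) (auto simp: fnn)
      also have "\<dots> = emeasure M X"
        unfolding X intv'[OF True, symmetric] by (simp add: emeasure_eq_measure)
      finally show ?thesis by simp
    next
      case False then show ?thesis unfolding X by simp
    qed
  next
    show "Int_stable (range (\<lambda>(a, b). {a<..b::real}))"
      by (auto simp: Int_stable_def)
  next
    show "sets M = sigma_sets UNIV (range (\<lambda>(a, b). {a<..b::real}))"
    proof -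
      have "sets (borel::real measure) = sigma_sets UNIV (range (\<lambda>(a, b). {a<..b::real}))"
        by (subst borel_sigma_sets_Ioc) (rule sets_measure_of, simp)
      then show ?thesis by simp
    qed
    then show "sets (density lborel (\<lambda>s. ennreal (f s))) = sigma_sets UNIV (range (\<lambda>(a, b). {a<..b::real}))"
      by simp
  next
    show "(\<Union>i. {- real (i::nat)<..real i}) = UNIV" by (rule UN_Ioc_eq_UNIV)
  qed (auto simp: emeasure_eq_measure)
  moreover have "bounded (range f)"
    unfolding bounded_iff using fB by auto
  ultimately show ?thesis using fnn contf by blast
qed


definition gdens :: "'a::euclidean_space \<Rightarrow> real" where
  "gdens t = (\<Prod>b\<in>Basis. std_normal_density (t \<bullet> b))"

lemma gdens_pos: "gdens t > 0"
  unfolding gdens_def by (intro prod_pos normal_density_pos) auto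

lemma gdens_measurable[measurable]: "gdens \<in> borel_measurable borel"
  unfolding gdens_def normal_density_def by measurable

lemma psf_lborel: "product_sigma_finite (\<lambda>_::'i. lborel :: real measure)"
  by (simp add: product_sigma_finite_def lborel.sigma_finite_measure_axioms)

lemma lborel_sum_inner:
  fixes f :: "'a::euclidean_space \<Rightarrow> real"
  assumes "c \<in> Basis" shows "(\<Sum>b\<in>Basis. f b *\<^sub>R b) \<bullet> c = f c"
  using assms by (simp add: inner_sum_left inner_Basis if_distrib cong: if_cong)

lemma integral_lborel_prod:
  fixes g :: "'a::euclidean_space \<Rightarrow> real \<Rightarrow> complex"
  assumes [measurable]: "\<And>b. b \<in> Basis \<Longrightarrow> g b \<in> borel_measurable borel"
    and int: "\<And>b. b \<in> Basis \<Longrightarrow> integrable lborel (g b)"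
  shows "(CLINT t|lborel. (\<Prod>b\<in>Basis. g b (t \<bullet> b))) = (\<Prod>b\<in>Basis. CLINT x|lborel. g b x)"
proof -
  interpret product_sigma_finite "\<lambda>_::'a. lborel :: real measure" by (rule psf_lborel)
  have "(CLINT t|lborel. (\<Prod>b\<in>Basis. g b (t \<bullet> b))) =
     (CLINT f|(\<Pi>\<^sub>M b\<in>Basis. lborel). (\<Prod>c\<in>Basis. g c ((\<Sum>b\<in>Basis. f b *\<^sub>R b) \<bullet> c)))"
    by (subst lborel_eq) (rule integral_distr; measurable)
  also have "\<dots> = (CLINT f|(\<Pi>\<^sub>M b\<in>Basis. lborel). (\<Prod>c\<in>Basis. g c (f c)))"
    by (intro Bochner_Integration.integral_cong prod.cong refl) (simp add: lborel_sum_inner)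
  also have "\<dots> = (\<Prod>b\<in>Basis. CLINT x|lborel. g b x)"
    by (rule product_integral_prod) (auto intro: int)
  finally show ?thesis .
qed

lemma nn_integral_std_normal: "(\<integral>\<^sup>+x. ennreal (std_normal_density x) \<partial>lborel) = 1"
proof -
  interpret prob_space "density lborel (\<lambda>x. ennreal (std_normal_density x))"
    by (rule prob_space_normal_density) simp
  have "emeasure (density lborel (\<lambda>x. ennreal (std_normal_density x))) UNIV = 1"
    using emeasure_space_1 by simp
  then show ?thesis by (simp add: emeasure_density)
qed

lemma prob_space_gauss: "prob_space (density lborel (\<lambda>t::'a::euclidean_space. ennreal (gdens t)))"
proof
  have "emeasure (density lborel (\<lambda>t::'a. ennreal (gdens t))) (space (density lborel (\<lambda>t::'a. ennreal (gdens t))))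
      = (\<integral>\<^sup>+t. (\<Prod>b\<in>Basis. ennreal (std_normal_density ((t::'a) \<bullet> b))) \<partial>lborel)"
    by (simp add: emeasure_density gdens_def prod_ennreal normal_density_nonneg)
  also have "\<dots> = (\<Prod>b\<in>(Basis::'a set). (\<integral>\<^sup>+x. ennreal (std_normal_density x) \<partial>lborel))"
    by (rule nn_integral_lborel_prod) (auto simp: normal_density_def)
  also have "\<dots> = 1" by (simp add: nn_integral_std_normal)
  finally show "emeasure (density lborel (\<lambda>t::'a. ennreal (gdens t))) (space (density lborel (\<lambda>t::'a. ennreal (gdens t)))) = 1" .
qed

lemma char_std_normal': "(CLINT x|lborel. complex_of_real (std_normal_density x) * iexp (u * x)) = complex_of_real (exp (- (u^2) / 2))"
proof -
  have "char std_normal_distribution u = complex_of_real (exp (- (u^2) / 2))"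
    by (simp add: char_std_normal_distribution)
  moreover have "char std_normal_distribution u = (CLINT x|lborel. std_normal_density x *\<^sub>R iexp (u * x))"
    unfolding char_def
    by (subst integral_density) (auto simp: normal_density_nonneg normal_density_def)
  ultimately show ?thesis by (simp add: scaleR_conv_of_real)
qed

lemma gauss_char:
  fixes v :: "'a::euclidean_space"
  shows "(CLINT t|density lborel (\<lambda>t. ennreal (gdens t)). iexp (\<xi> * (t \<bullet> v))) =
     (\<Prod>b\<in>Basis. complex_of_real (exp (- ((\<xi> * (v \<bullet> b))^2) / 2)))"
proof -
  have "(CLINT t|density lborel (\<lambda>t. ennreal (gdens t)). iexp (\<xi> * (t \<bullet> v))) =
      (CLINT t|lborel. gdens t *\<^sub>R iexp (\<xi> * (t \<bullet> v)))"
    by (subst integral_density) (auto simp: gdens_pos less_imp_le)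
  also have "\<dots> = (CLINT t|lborel. (\<Prod>b\<in>Basis. complex_of_real (std_normal_density (t \<bullet> b)) * iexp ((\<xi> * (v \<bullet> b)) * (t \<bullet> b))))"
  proof (intro Bochner_Integration.integral_cong refl)
    fix t :: 'a
    have "\<xi> * (t \<bullet> v) = (\<Sum>b\<in>Basis. (\<xi> * (v \<bullet> b)) * (t \<bullet> b))"
      by (simp add: euclidean_inner[of t v] sum_distrib_left mult_ac)
    then have "iexp (\<xi> * (t \<bullet> v)) = (\<Prod>b\<in>Basis. iexp ((\<xi> * (v \<bullet> b)) * (t \<bullet> b)))"
      by (simp add: sum_distrib_left exp_sum)
    then show "gdens t *\<^sub>R iexp (\<xi> * (t \<bullet> v)) = (\<Prod>b\<in>Basis. complex_of_real (std_normal_density (t \<bullet> b)) * iexp ((\<xi> * (v \<bullet> b)) * (t \<bullet> b)))"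
      by (simp add: gdens_def scaleR_conv_of_real prod.distrib)
  qed
  also have "\<dots> = (\<Prod>b\<in>Basis. CLINT x|lborel. complex_of_real (std_normal_density x) * iexp ((\<xi> * (v \<bullet> b)) * x))"
  proof (rule integral_lborel_prod)
    fix b :: 'a
    show "(\<lambda>x. complex_of_real (std_normal_density x) * iexp (\<xi> * (v \<bullet> b) * x)) \<in> borel_measurable borel"
      unfolding normal_density_def by measurable
    have "integrable lborel (\<lambda>x. std_normal_density x)"
      using integrable_normal_moment[of 1 0 0] by (simp add: normal_density_def)
    then show "integrable lborel (\<lambda>x. complex_of_real (std_normal_density x) * iexp (\<xi> * (v \<bullet> b) * x))"
    proof (rule Bochner_Integration.integrable_bound)
      show "(\<lambda>x. complex_of_real (std_normal_density x) * iexp (\<xi> * (v \<bullet> b) * x)) \<in> borel_measurable lborel"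
        unfolding normal_density_def by measurable
      have "norm (complex_of_real (std_normal_density x) * iexp (\<xi> * (v \<bullet> b) * x)) \<le> norm (std_normal_density x)" for x
        by (simp only: norm_mult norm_exp_i_times norm_of_real) simp
      then show "AE x in lborel. norm (complex_of_real (std_normal_density x) * iexp (\<xi> * (v \<bullet> b) * x)) \<le> norm (std_normal_density x)"
        by simp
    qed
  qed
  also have "\<dots> = (\<Prod>b\<in>Basis. complex_of_real (exp (- ((\<xi> * (v \<bullet> b))^2) / 2)))"
    by (intro prod.cong refl char_std_normal')
  finally show ?thesis .
qed


lemma power_le_exp_fact:
  fixes z :: real assumes "z \<ge> 0" shows "z ^ n / fact n \<le> exp z"
proof -
  have "(\<lambda>k. z ^ k /\<^sub>R fact k) sums exp z" by (rule exp_converges)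
  then have s: "summable (\<lambda>k. z ^ k / fact k)" and e: "exp z = (\<Sum>k. z ^ k / fact k)"
    by (auto simp: sums_iff divide_inverse mult.commute)
  have "sum (\<lambda>k. z ^ k / fact k) {n} \<le> (\<Sum>k. z ^ k / fact k)"
    by (rule sum_le_suminf[OF s]) (use assms in auto)
  then show ?thesis using e by simp
qed

lemma exp_powr_bound:
  fixes z q :: real assumes q: "q > 0" and z: "z > 0"
  shows "exp (- z) \<le> fact (nat \<lceil>q\<rceil>) * z powr (- q)"
proof -
  define n where "n = nat \<lceil>q\<rceil>"
  have nq: "q \<le> real n" unfolding n_def by linarith
  have f1: "fact n \<ge> (1::real)" by simp
  show ?thesis
  proof (cases "z \<ge> 1")
    case True
    have "z ^ n / fact n \<le> exp z" using power_le_exp_fact z by simp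
    then have "exp (- z) \<le> fact n / z ^ n"
      using z by (simp add: exp_minus field_simps)
    also have "\<dots> = fact n * z powr (- real n)"
      using z by (simp add: powr_minus powr_realpow divide_inverse)
    also have "\<dots> \<le> fact n * z powr (- q)"
      using True nq by (intro mult_left_mono powr_mono) auto
    finally show ?thesis unfolding n_def .
  next
    case False
    have "exp (- z) \<le> 1" using z by simp
    also have "1 \<le> z powr (- q)"
    proof -
      have "z powr q \<le> 1 powr q" using False z q by (intro powr_mono2) auto
      then show ?thesis using z by (simp add: powr_minus one_le_inverse_iff)
    qed
    also have "\<dots> \<le> fact n * z powr (- q)" using f1 by (simp add: mult_le_cancel_right1)
    finally show ?thesis unfolding n_def .
  qed
qed

lemma nn_integral_reflect:
  fixes f :: "real \<Rightarrow> ennreal" assumes [measurable]: "f \<in> borel_measurable borel"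
  shows "(\<integral>\<^sup>+x. f (- x) \<partial>lborel) = (\<integral>\<^sup>+x. f x \<partial>lborel)"
  using nn_integral_real_affine[of f "-1" 0] by simp

lemma nn_integral_shift:
  fixes f :: "real \<Rightarrow> ennreal" assumes [measurable]: "f \<in> borel_measurable borel"
  shows "(\<integral>\<^sup>+x. f (x - c) \<partial>lborel) = (\<integral>\<^sup>+x. f x \<partial>lborel)"
  using nn_integral_real_affine[of f 1 "-c"] by simp

lemma singular_finite:
  fixes p :: real assumes p: "0 < p" "p < 1"
  shows "(\<integral>\<^sup>+u. indicator {-3..3} u * ennreal (\<bar>u\<bar> powr (- p)) \<partial>lborel) < \<infinity>"
proof -
  have pos: "(\<integral>\<^sup>+u. indicator {0..3} u * ennreal (u powr (- p)) \<partial>lborel) = ennreal (3 powr (- p + 1) / (- p + 1))"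
  proof -
    have "(\<integral>\<^sup>+u. ennreal (indicator {0..3} u * u powr (- p)) \<partial>lborel) = ennreal (3 powr (- p + 1) / (- p + 1))"
      by (rule nn_integral_has_integral_lebesgue) (use has_integral_powr_from_0[of "-p" 3] p in auto)
    moreover have "(\<integral>\<^sup>+u. indicator {0..3} u * ennreal (u powr (- p)) \<partial>lborel) = (\<integral>\<^sup>+u. ennreal (indicator {0..3} u * u powr (- p)) \<partial>lborel)"
      by (intro nn_integral_cong) (simp split: split_indicator)
    ultimately show ?thesis by simp
  qed
  have le: "indicator {-3..3} u * ennreal (\<bar>u\<bar> powr (- p)) \<le>
      indicator {0..3} u * ennreal (u powr (- p)) + indicator {0..3} (- u) * ennreal ((- u) powr (- p))" for u :: real
    by (cases "u \<ge> 0") (auto split: split_indicator)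
  have "(\<integral>\<^sup>+u. indicator {-3..3} u * ennreal (\<bar>u\<bar> powr (- p)) \<partial>lborel) \<le>
      (\<integral>\<^sup>+u. indicator {0..3} u * ennreal (u powr (- p)) + indicator {0..3} (- u) * ennreal ((- u) powr (- p)) \<partial>lborel)"
    by (intro nn_integral_mono le)
  also have "\<dots> = (\<integral>\<^sup>+u. indicator {0..3} u * ennreal (u powr (- p)) \<partial>lborel) +
      (\<integral>\<^sup>+u. indicator {0..3} (- u) * ennreal ((- u) powr (- p)) \<partial>lborel)"
    by (rule nn_integral_add) auto
  also have "(\<integral>\<^sup>+u. indicator {0..3} (- u) * ennreal ((- u) powr (- p)) \<partial>lborel) =
      (\<integral>\<^sup>+u. indicator {0..3} u * ennreal (u powr (- p)) \<partial>lborel)"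
    by (rule nn_integral_reflect[where f="\<lambda>u. indicator {0..3} u * ennreal (u powr (- p))"]) measurable
  also have "(\<integral>\<^sup>+u. indicator {0..3} u * ennreal (u powr (- p)) \<partial>lborel) +
      (\<integral>\<^sup>+u. indicator {0..3} u * ennreal (u powr (- p)) \<partial>lborel) < \<infinity>"
    unfolding pos by simp
  finally show ?thesis .
qed

lemma tail_finite:
  fixes q :: real assumes q: "q > 1"
  shows "(\<integral>\<^sup>+x. ennreal (if \<bar>x\<bar> \<le> 1 then 1 else \<bar>x\<bar> powr (- q)) \<partial>lborel) < \<infinity>"
proof -
  have pos: "(\<integral>\<^sup>+u. indicator {1..} u * ennreal (u powr (- q)) \<partial>lborel) = ennreal (- (1 powr (- q + 1)) / (- q + 1))"
  proof -
    have "(\<integral>\<^sup>+u. ennreal (indicator {1..} u * u powr (- q)) \<partial>lborel) = ennreal (- (1 powr (- q + 1)) / (- q + 1))"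
      by (rule nn_integral_has_integral_lebesgue) (use has_integral_powr_to_inf[of "-q" 1] q in auto)
    moreover have "(\<integral>\<^sup>+u. indicator {1..} u * ennreal (u powr (- q)) \<partial>lborel) = (\<integral>\<^sup>+u. ennreal (indicator {1..} u * u powr (- q)) \<partial>lborel)"
      by (intro nn_integral_cong) (simp split: split_indicator)
    ultimately show ?thesis by simp
  qed
  have le: "ennreal (if \<bar>x\<bar> \<le> 1 then 1 else \<bar>x\<bar> powr (- q)) \<le>
      indicator {-1..1} x + (indicator {1..} x * ennreal (x powr (- q)) + indicator {1..} (- x) * ennreal ((- x) powr (- q)))" for x :: real
    by (cases "x \<ge> 0") (auto split: split_indicator)
  have "(\<integral>\<^sup>+x. ennreal (if \<bar>x\<bar> \<le> 1 then 1 else \<bar>x\<bar> powr (- q)) \<partial>lborel) \<le>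
      (\<integral>\<^sup>+x. indicator {-1..1} x + (indicator {1..} x * ennreal (x powr (- q)) + indicator {1..} (- x) * ennreal ((- x) powr (- q))) \<partial>lborel)"
    by (intro nn_integral_mono le)
  also have "\<dots> = emeasure lborel {-1..1::real} + ((\<integral>\<^sup>+u. indicator {1..} u * ennreal (u powr (- q)) \<partial>lborel) +
      (\<integral>\<^sup>+u. indicator {1..} (- u) * ennreal ((- u) powr (- q)) \<partial>lborel))"
  proof -
    have "(\<integral>\<^sup>+x. indicator {-1..1} x + (indicator {1..} x * ennreal (x powr (- q)) + indicator {1..} (- x) * ennreal ((- x) powr (- q))) \<partial>lborel)
      = (\<integral>\<^sup>+x. indicator {-1..1} (x::real) \<partial>lborel) + (\<integral>\<^sup>+x. (indicator {1..} x * ennreal (x powr (- q)) + indicator {1..} (- x) * ennreal ((- x) powr (- q))) \<partial>lborel)"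
      by (rule nn_integral_add[where f="indicator {-1..1}" and g="\<lambda>x. indicator {1..} x * ennreal (x powr (- q)) + indicator {1..} (- x) * ennreal ((- x) powr (- q))"]) auto
    also have "(\<integral>\<^sup>+x. (indicator {1..} x * ennreal (x powr (- q)) + indicator {1..} (- x) * ennreal ((- x) powr (- q))) \<partial>lborel)
      = (\<integral>\<^sup>+u. indicator {1..} u * ennreal (u powr (- q)) \<partial>lborel) + (\<integral>\<^sup>+u. indicator {1..} (- u) * ennreal ((- u) powr (- q)) \<partial>lborel)"
      by (rule nn_integral_add) auto
    finally show ?thesis by simp
  qed
  also have "(\<integral>\<^sup>+u. indicator {1..} (- u) * ennreal ((- u) powr (- q)) \<partial>lborel) =
      (\<integral>\<^sup>+u. indicator {1..} u * ennreal (u powr (- q)) \<partial>lborel)"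
    by (rule nn_integral_reflect[where f="\<lambda>u. indicator {1..} u * ennreal (u powr (- q))"]) measurable
  also have "emeasure lborel {-1..1::real} + ((\<integral>\<^sup>+u. indicator {1..} u * ennreal (u powr (- q)) \<partial>lborel) +
      (\<integral>\<^sup>+u. indicator {1..} u * ennreal (u powr (- q)) \<partial>lborel)) < \<infinity>"
    unfolding pos by (simp add: ennreal_mult_less_top)
  finally show ?thesis .
qed


lemma dist_S1_cases:
  assumes x: "x \<in> {0..<1}" and y: "y \<in> {0..<1}" and xy: "x \<noteq> y"
  shows "dist_S1 x y > 0 \<and> (dist_S1 x y = \<bar>y - x\<bar> \<or> dist_S1 x y = \<bar>y - (x - 1)\<bar> \<or> dist_S1 x y = \<bar>y - (x + 1)\<bar>)"
proof (cases "y < x")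
  case True
  have f: "frac (x - y) = x - y" using x y True by (subst frac_eq) auto
  show ?thesis unfolding dist_S1_def f using x y True by (auto simp: min_def)
next
  case False
  then have yx: "x < y" using xy by simp
  have "\<lfloor>x - y\<rfloor> = -1" using x y yx by (subst floor_eq_iff) auto
  then have f: "frac (x - y) = x - y + 1" unfolding frac_def by simp
  show ?thesis unfolding dist_S1_def f using x y yx by (auto simp: min_def)
qed

lemma dist_S1_powr_bound:
  assumes x: "x \<in> {0..<1}" and y: "y \<in> {0..<1}" and xy: "x \<noteq> y"
  shows "dist_S1 x y powr (- p) \<le> \<bar>y - x\<bar> powr (- p) + \<bar>y - (x - 1)\<bar> powr (- p) + \<bar>y - (x + 1)\<bar> powr (- p)"
  using dist_S1_cases[OF assms] by (elim conjE disjE) (auto intro: add_increasing add_increasing2)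

lemma exp_neg_sq_bound:
  fixes \<xi> c1 d \<alpha> q :: real
  assumes q: "q > 0" and \<xi>: "\<xi> \<noteq> 0" and c1: "c1 > 0" and d: "d > 0"
  shows "exp (- ((\<xi> * (c1 * d powr \<alpha>))\<^sup>2 / 2)) \<le>
     fact (nat \<lceil>q\<rceil>) * (c1\<^sup>2 / 2) powr (- q) * \<bar>\<xi>\<bar> powr (- 2 * q) * d powr (- 2 * \<alpha> * q)"
proof -
  define z where "z = (\<xi> * (c1 * d powr \<alpha>))\<^sup>2 / 2"
  have z: "z = (c1\<^sup>2 / 2) * \<bar>\<xi>\<bar> powr 2 * d powr (2 * \<alpha>)"
  proof -
    have e1: "(d powr \<alpha>)\<^sup>2 = d powr (2 * \<alpha>)" using d by (simp add: power2_eq_square powr_add[symmetric])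
    have e2: "\<bar>\<xi>\<bar> powr 2 = \<xi>\<^sup>2" using \<xi> powr_realpow[of "\<bar>\<xi>\<bar>" 2] by simp
    show ?thesis unfolding z_def by (simp add: power_mult_distrib e1 e2 mult_ac)
  qed
  have zpos: "z > 0" unfolding z using \<xi> c1 d by auto
  have "exp (- z) \<le> fact (nat \<lceil>q\<rceil>) * z powr (- q)" by (rule exp_powr_bound[OF q zpos])
  also have "z powr (- q) = (c1\<^sup>2 / 2) powr (- q) * \<bar>\<xi>\<bar> powr (- 2 * q) * d powr (- 2 * \<alpha> * q)"
  proof -
    have "z powr (- q) = ((c1\<^sup>2 / 2) * \<bar>\<xi>\<bar> powr 2) powr (- q) * (d powr (2 * \<alpha>)) powr (- q)"
      unfolding z by (rule powr_mult; simp)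
    also have "((c1\<^sup>2 / 2) * \<bar>\<xi>\<bar> powr 2) powr (- q) = (c1\<^sup>2 / 2) powr (- q) * (\<bar>\<xi>\<bar> powr 2) powr (- q)"
      by (rule powr_mult; simp)
    finally show ?thesis by (simp only: powr_powr) (simp add: mult_ac)
  qed
  finally show ?thesis unfolding z_def by (simp add: mult_ac)
qed


definition U01 :: "real measure" where
  "U01 = density lborel (\<lambda>x. indicator {0..<1} x :: ennreal)"

lemma sets_U01[measurable_cong, simp]: "sets U01 = sets borel"
  unfolding U01_def by simp

lemma space_U01[simp]: "space U01 = UNIV"
  unfolding U01_def by simp

lemma prob_space_U01: "prob_space U01"
proof
  show "emeasure U01 (space U01) = 1"
    unfolding U01_def by (simp add: emeasure_density)
qed

lemma AE_U01: "AE x in U01. x \<in> {0..<1}"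
  unfolding U01_def by (subst AE_density) (auto split: split_indicator)

lemma nn_integral_U01: "f \<in> borel_measurable borel \<Longrightarrow> (\<integral>\<^sup>+x. f x \<partial>U01) = (\<integral>\<^sup>+x. indicator {0..<1} x * f x \<partial>lborel)"
  unfolding U01_def by (subst nn_integral_density) auto

definition GT :: "'a::euclidean_space measure" where
  "GT = density lborel (\<lambda>t. ennreal (gdens t))"

lemma sets_GT[measurable_cong, simp]: "sets GT = sets borel"
  unfolding GT_def by simp

lemma space_GT[simp]: "space GT = UNIV"
  unfolding GT_def by simp

lemma prob_space_GT: "prob_space GT"
  unfolding GT_def by (rule prob_space_gauss)

lemma measurable_dist_S1[measurable]: "(\<lambda>(x, y). dist_S1 x y) \<in> borel_measurable (borel \<Otimes>\<^sub>M borel)"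
  unfolding dist_S1_def frac_def by measurable

lemma main_estimate:
  fixes W :: "real \<Rightarrow> real" and \<Phi> :: "real \<Rightarrow> 'a::euclidean_space" and \<alpha> c1 :: real
  assumes Wm[measurable]: "W \<in> borel_measurable borel" and \<Phi>m[measurable]: "\<Phi> \<in> borel_measurable borel"
    and \<alpha>: "0 < \<alpha>" "\<alpha> < 1/2" and c1: "c1 > 0"
    and low: "\<And>x y. \<exists>b\<in>Basis. c1 * dist_S1 x y powr \<alpha> \<le> \<bar>(\<Phi> x - \<Phi> y) \<bullet> b\<bar>"
  shows "AE t in lborel. integrable lborel (\<lambda>\<xi>. CLINT x|U01. iexp (\<xi> * (W x + t \<bullet> \<Phi> x)))"
proof -
  interpret U: prob_space U01 by (rule prob_space_U01)
  interpret T: prob_space "GT :: 'a measure" by (rule prob_space_GT)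
  define \<phi> where "\<phi> t \<xi> = (CLINT x|U01. iexp (\<xi> * (W x + t \<bullet> \<Phi> x)))" for t :: 'a and \<xi> :: real
  have \<phi>m[measurable]: "(\<lambda>(t, \<xi>). \<phi> t \<xi>) \<in> borel_measurable (borel \<Otimes>\<^sub>M borel)"
    unfolding \<phi>_def by measurable
  have \<phi>m1[measurable]: "(\<lambda>t. \<phi> t \<xi>) \<in> borel_measurable borel" for \<xi>
    unfolding \<phi>_def by measurable
  have \<phi>1: "norm (\<phi> t \<xi>) \<le> 1" for t \<xi>
  proof -
    have "norm (\<phi> t \<xi>) \<le> (\<integral>x. norm (iexp (\<xi> * (W x + t \<bullet> \<Phi> x))) \<partial>U01)"
      unfolding \<phi>_def by (rule integral_norm_bound)
    also have "\<dots> = 1" using U.prob_space by (simp add: norm_exp_i_times del: of_real_mult of_real_add)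
    finally show ?thesis .
  qed
  define q where "q = (2 * \<alpha> + 1) / (4 * \<alpha>)"
  have q1: "q > 1" unfolding q_def using \<alpha> by (simp add: field_simps)
  define k where "k \<xi> x y = exp (- ((\<xi> * (c1 * dist_S1 x y powr \<alpha>))\<^sup>2 / 2))" for \<xi> x y :: real
  have km[measurable]: "(\<lambda>(x, y). k \<xi> x y) \<in> borel_measurable (borel \<Otimes>\<^sub>M borel)" for \<xi>
    unfolding k_def by measurable
  define K where "K \<xi> = (\<integral>z. k \<xi> (fst z) (snd z) \<partial>(U01 \<Otimes>\<^sub>M U01))" for \<xi>
  interpret UU: prob_space "U01 \<Otimes>\<^sub>M U01" by (intro prob_space_pair U.prob_space_axioms)
  have kint: "integrable (U01 \<Otimes>\<^sub>M U01) (\<lambda>z. k \<xi> (fst z) (snd z))" for \<xi>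
  proof (rule UU.integrable_const_bound[where B=1])
    show "(\<lambda>z. k \<xi> (fst z) (snd z)) \<in> borel_measurable (U01 \<Otimes>\<^sub>M U01)"
      using km[of \<xi>] by (simp add: split_beta')
  qed (auto simp: k_def)
  interpret PU: pair_sigma_finite U01 U01 ..
  interpret TP: pair_sigma_finite "GT :: 'a measure" "U01 \<Otimes>\<^sub>M U01" ..
  interpret TPP: prob_space "(GT :: 'a measure) \<Otimes>\<^sub>M (U01 \<Otimes>\<^sub>M U01)"
    by (intro prob_space_pair T.prob_space_axioms UU.prob_space_axioms)
  have S1: "(\<integral>t. norm (\<phi> t \<xi>) \<partial>GT)\<^sup>2 \<le> K \<xi>" for \<xi>
  proof -
    define h where "h t z = iexp (\<xi> * (W (fst z) + t \<bullet> \<Phi> (fst z))) * iexp (- (\<xi> * (W (snd z) + t \<bullet> \<Phi> (snd z))))"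
      for t :: 'a and z :: "real \<times> real"
    have hm[measurable]: "(\<lambda>(t, z). h t z) \<in> borel_measurable (GT \<Otimes>\<^sub>M (U01 \<Otimes>\<^sub>M U01))"
      unfolding h_def by measurable
    have hm1[measurable]: "h t \<in> borel_measurable (U01 \<Otimes>\<^sub>M U01)" for t
      unfolding h_def by measurable
    have cj: "iexp (- r) = cnj (iexp r)" for r by (simp add: exp_cnj)
    have h1: "norm (h t z) = 1" for t z
      unfolding h_def by (simp only: norm_mult norm_exp_i_times mult_1_left)
    have hint: "integrable (U01 \<Otimes>\<^sub>M U01) (h t)" for t
      by (rule UU.integrable_const_bound[where B=1]) (auto simp: h1)
    have phi_sq: "(norm (\<phi> t \<xi>))\<^sup>2 = Re (\<integral>z. h t z \<partial>(U01 \<Otimes>\<^sub>M U01))" for t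
    proof -
      have "(\<integral>z. h t z \<partial>(U01 \<Otimes>\<^sub>M U01)) = (\<integral>x. (\<integral>y. h t (x, y) \<partial>U01) \<partial>U01)"
        by (rule PU.integral_fst'[symmetric]) (rule hint)
      also have "\<dots> = (\<integral>x. iexp (\<xi> * (W x + t \<bullet> \<Phi> x)) * cnj (\<phi> t \<xi>) \<partial>U01)"
        unfolding h_def \<phi>_def cj by (simp del: of_real_mult of_real_add)
      also have "\<dots> = \<phi> t \<xi> * cnj (\<phi> t \<xi>)"
        unfolding \<phi>_def by (simp del: of_real_mult of_real_add)
      also have "\<dots> = complex_of_real ((norm (\<phi> t \<xi>))\<^sup>2)"
        by (rule complex_norm_square[symmetric])
      finally show ?thesis by simp
    qed
    have Tm[measurable]: "(\<lambda>t. \<integral>z. h t z \<partial>(U01 \<Otimes>\<^sub>M U01)) \<in> borel_measurable GT"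
      by measurable
    have Tint: "integrable GT (\<lambda>t. \<integral>z. h t z \<partial>(U01 \<Otimes>\<^sub>M U01))"
    proof (rule T.integrable_const_bound[where B=1])
      show "AE t in GT. norm (\<integral>z. h t z \<partial>(U01 \<Otimes>\<^sub>M U01)) \<le> 1"
      proof (rule AE_I2)
        fix t
        have "norm (\<integral>z. h t z \<partial>(U01 \<Otimes>\<^sub>M U01)) \<le> (\<integral>z. norm (h t z) \<partial>(U01 \<Otimes>\<^sub>M U01))"
          by (rule integral_norm_bound)
        also have "\<dots> = 1" using UU.prob_space by (simp add: h1)
        finally show "norm (\<integral>z. h t z \<partial>(U01 \<Otimes>\<^sub>M U01)) \<le> 1" .
      qed
    qed simp
    have Zm[measurable]: "(\<lambda>z. \<integral>t. h t z \<partial>GT) \<in> borel_measurable (U01 \<Otimes>\<^sub>M U01)"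
      by measurable
    have step_c: "(\<integral>t. (norm (\<phi> t \<xi>))\<^sup>2 \<partial>GT) = Re (\<integral>z. (\<integral>t. h t z \<partial>GT) \<partial>(U01 \<Otimes>\<^sub>M U01))"
    proof -
      have "(\<integral>t. (norm (\<phi> t \<xi>))\<^sup>2 \<partial>GT) = (\<integral>t. Re (\<integral>z. h t z \<partial>(U01 \<Otimes>\<^sub>M U01)) \<partial>GT)"
        by (simp add: phi_sq)
      also have "\<dots> = Re (\<integral>t. (\<integral>z. h t z \<partial>(U01 \<Otimes>\<^sub>M U01)) \<partial>GT)"
        by (rule integral_bounded_linear[OF bounded_linear_Re Tint])
      also have "(\<integral>t. (\<integral>z. h t z \<partial>(U01 \<Otimes>\<^sub>M U01)) \<partial>GT) = (\<integral>z. (\<integral>t. h t z \<partial>GT) \<partial>(U01 \<Otimes>\<^sub>M U01))"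
      proof (rule TP.Fubini_integral[symmetric])
        show "integrable (GT \<Otimes>\<^sub>M (U01 \<Otimes>\<^sub>M U01)) (\<lambda>(t, z). h t z)"
          by (rule TPP.integrable_const_bound[where B=1]) (auto simp: h1)
      qed
      finally show ?thesis .
    qed
    have step_e: "norm (\<integral>t. h t z \<partial>GT) \<le> k \<xi> (fst z) (snd z)" for z
    proof -
      obtain x y where z: "z = (x, y)" by (cases z)
      define v where "v = \<Phi> x - \<Phi> y"
      have "h t z = iexp (\<xi> * (W x - W y)) * iexp (\<xi> * (t \<bullet> v))" for t
        unfolding h_def z v_def
        by (simp add: exp_add[symmetric] inner_diff_right algebra_simps)
      then have "(\<integral>t. h t z \<partial>GT) = iexp (\<xi> * (W x - W y)) * (\<integral>t. iexp (\<xi> * (t \<bullet> v)) \<partial>GT)"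
        by simp
      also have "(\<integral>t. iexp (\<xi> * (t \<bullet> v)) \<partial>GT) = (\<Prod>b\<in>Basis. complex_of_real (exp (- ((\<xi> * (v \<bullet> b))\<^sup>2) / 2)))"
        unfolding GT_def by (rule gauss_char)
      finally have "norm (\<integral>t. h t z \<partial>GT) = (\<Prod>b\<in>Basis. exp (- ((\<xi> * (v \<bullet> b))\<^sup>2) / 2))"
        by (simp add: norm_mult prod_norm[symmetric] del: of_real_mult of_real_add)
      also obtain b0 where b0: "b0 \<in> Basis" "c1 * dist_S1 x y powr \<alpha> \<le> \<bar>v \<bullet> b0\<bar>"
        using low[of x y] unfolding v_def by blast
      have "(\<Prod>b\<in>Basis. exp (- ((\<xi> * (v \<bullet> b))\<^sup>2) / 2)) \<le> exp (- ((\<xi> * (v \<bullet> b0))\<^sup>2) / 2)"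
      proof -
        have "(\<Prod>b\<in>Basis. exp (- ((\<xi> * (v \<bullet> b))\<^sup>2) / 2)) =
            exp (- ((\<xi> * (v \<bullet> b0))\<^sup>2) / 2) * (\<Prod>b\<in>Basis - {b0}. exp (- ((\<xi> * (v \<bullet> b))\<^sup>2) / 2))"
          using b0(1) by (simp add: prod.remove)
        also have "\<dots> \<le> exp (- ((\<xi> * (v \<bullet> b0))\<^sup>2) / 2) * 1"
          by (intro mult_left_mono prod_le_1) auto
        finally show ?thesis by simp
      qed
      also have "\<dots> \<le> k \<xi> (fst z) (snd z)"
      proof -
        have "\<bar>\<xi> * (c1 * dist_S1 x y powr \<alpha>)\<bar> \<le> \<bar>\<xi> * (v \<bullet> b0)\<bar>"
          using b0(2) c1 by (simp add: abs_mult mult_left_mono)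
        then have "(\<xi> * (c1 * dist_S1 x y powr \<alpha>))\<^sup>2 \<le> (\<xi> * (v \<bullet> b0))\<^sup>2"
          by (simp add: abs_le_square_iff)
        then show ?thesis unfolding k_def z by simp
      qed
      finally show ?thesis .
    qed
    have step_d: "Re (\<integral>z. (\<integral>t. h t z \<partial>GT) \<partial>(U01 \<Otimes>\<^sub>M U01)) \<le> K \<xi>"
    proof -
      have "Re (\<integral>z. (\<integral>t. h t z \<partial>GT) \<partial>(U01 \<Otimes>\<^sub>M U01)) \<le> norm (\<integral>z. (\<integral>t. h t z \<partial>GT) \<partial>(U01 \<Otimes>\<^sub>M U01))"
        by (rule complex_Re_le_cmod)
      also have "\<dots> \<le> (\<integral>z. norm (\<integral>t. h t z \<partial>GT) \<partial>(U01 \<Otimes>\<^sub>M U01))"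
        by (rule integral_norm_bound)
      also have "\<dots> \<le> K \<xi>"
        unfolding K_def
      proof (rule integral_mono[OF _ kint step_e])
        show "integrable (U01 \<Otimes>\<^sub>M U01) (\<lambda>z. norm (\<integral>t. h t z \<partial>GT))"
        proof (rule UU.integrable_const_bound[where B=1])
          have "norm (\<integral>t. h t z \<partial>GT) \<le> 1" for z
          proof -
            have "k \<xi> (fst z) (snd z) \<le> 1" unfolding k_def by simp
            then show ?thesis using step_e[of z] by linarith
          qed
          then show "AE z in U01 \<Otimes>\<^sub>M U01. norm (norm (\<integral>t. h t z \<partial>GT)) \<le> 1" by simp
        qed simp
      qed
      finally show ?thesis .
    qed
    have intn: "integrable GT (\<lambda>t. norm (\<phi> t \<xi>))"
      by (rule T.integrable_const_bound[where B=1]) (auto simp: \<phi>1)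
    have intn2: "integrable GT (\<lambda>t. (norm (\<phi> t \<xi>))\<^sup>2)"
      by (rule T.integrable_const_bound[where B=1]) (auto simp: \<phi>1 abs_square_le_1)
    have "(\<integral>t. norm (\<phi> t \<xi>) \<partial>GT)\<^sup>2 \<le> (\<integral>t. (norm (\<phi> t \<xi>))\<^sup>2 \<partial>GT)"
      using T.variance_eq[OF intn intn2] T.variance_positive[of "\<lambda>t. norm (\<phi> t \<xi>)"] by simp
    also have "\<dots> \<le> K \<xi>" using step_c step_d by simp
    finally show ?thesis .
  qed
  obtain Cst where Cst: "Cst \<ge> 0" "\<And>\<xi>. \<xi> \<noteq> 0 \<Longrightarrow> K \<xi> \<le> Cst * \<bar>\<xi>\<bar> powr (- 2 * q)"
  proof -
    define p where "p = 2 * \<alpha> * q"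
    have pe: "p = \<alpha> + 1/2" unfolding p_def q_def using \<alpha> by (simp add: field_simps)
    have p: "0 < p" "p < 1" unfolding pe using \<alpha> by simp_all
    define Jp where "Jp = (\<integral>\<^sup>+u. indicator {-3..3} u * ennreal (\<bar>u\<bar> powr (- p)) \<partial>lborel)"
    have Jfin: "Jp < \<infinity>" unfolding Jp_def by (rule singular_finite[OF p])
    define J where "J = enn2real Jp"
    have JJ: "Jp = ennreal J" unfolding J_def using Jfin by (simp add: less_top)
    have J0: "J \<ge> 0" unfolding J_def by simp
    have shiftJ: "(\<integral>\<^sup>+y. ennreal (\<bar>y - c\<bar> powr (- p)) \<partial>U01) \<le> Jp" if c: "c \<in> {-1..2}" for c
    proof -
      have "(\<integral>\<^sup>+y. ennreal (\<bar>y - c\<bar> powr (- p)) \<partial>U01) = (\<integral>\<^sup>+y. indicator {0..<1} y * ennreal (\<bar>y - c\<bar> powr (- p)) \<partial>lborel)"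
        by (rule nn_integral_U01) simp
      also have "\<dots> \<le> (\<integral>\<^sup>+y. indicator {-3..3} (y - c) * ennreal (\<bar>y - c\<bar> powr (- p)) \<partial>lborel)"
        using c by (intro nn_integral_mono) (auto split: split_indicator)
      also have "\<dots> = Jp" unfolding Jp_def
        by (rule nn_integral_shift[where f="\<lambda>u. indicator {-3..3} u * ennreal (\<bar>u\<bar> powr (- p))"]) simp
      finally show ?thesis .
    qed
    define Cq where "Cq = fact (nat \<lceil>q\<rceil>) * (c1\<^sup>2 / 2) powr (- q)"
    have Cq0: "Cq \<ge> 0" unfolding Cq_def by simp
    have bound: "K \<xi> \<le> (Cq * 3 * J) * \<bar>\<xi>\<bar> powr (- 2 * q)" if \<xi>: "\<xi> \<noteq> 0" for \<xi>
    proof -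
      define C' where "C' = Cq * \<bar>\<xi>\<bar> powr (- 2 * q)"
      have C'0: "C' \<ge> 0" unfolding C'_def using Cq0 by simp
      have k0: "k \<xi> x y \<ge> 0" for x y unfolding k_def by simp
      have inner: "(\<integral>\<^sup>+y. ennreal (k \<xi> x y) \<partial>U01) \<le> ennreal (C' * 3 * J)" if x: "x \<in> {0..<1}" for x
      proof -
        have "AE y in U01. y \<noteq> x"
          unfolding U01_def by (subst AE_density) (auto intro: AE_mp[OF AE_lborel_singleton[of x]])
        then have "AE y in U01. ennreal (k \<xi> x y) \<le> ennreal C' * (ennreal (\<bar>y - x\<bar> powr (- p)) +
             ennreal (\<bar>y - (x - 1)\<bar> powr (- p)) + ennreal (\<bar>y - (x + 1)\<bar> powr (- p)))"
          using AE_U01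
        proof eventually_elim
          case (elim y)
          have d: "dist_S1 x y > 0" using dist_S1_cases[OF x elim(2)] elim(1) by auto
          have "k \<xi> x y \<le> Cq * \<bar>\<xi>\<bar> powr (- 2 * q) * dist_S1 x y powr (- p)"
            unfolding k_def Cq_def p_def using exp_neg_sq_bound[OF _ \<xi> c1 d, of q \<alpha>] q1
            by (simp add: mult_ac)
          also have "\<dots> \<le> C' * (\<bar>y - x\<bar> powr (- p) + \<bar>y - (x - 1)\<bar> powr (- p) + \<bar>y - (x + 1)\<bar> powr (- p))"
            unfolding C'_def using dist_S1_powr_bound[OF x elim(2)] elim(1) Cq0
            by (intro mult_left_mono) auto
          finally show ?case
            by (simp add: ennreal_mult[symmetric] C'0 ennreal_plus[symmetric] del: ennreal_plus)
        qed
        then have "(\<integral>\<^sup>+y. ennreal (k \<xi> x y) \<partial>U01) \<le> (\<integral>\<^sup>+y. ennreal C' * (ennreal (\<bar>y - x\<bar> powr (- p)) +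
             ennreal (\<bar>y - (x - 1)\<bar> powr (- p)) + ennreal (\<bar>y - (x + 1)\<bar> powr (- p))) \<partial>U01)"
          by (rule nn_integral_mono_AE)
        also have "\<dots> = ennreal C' * ((\<integral>\<^sup>+y. ennreal (\<bar>y - x\<bar> powr (- p)) \<partial>U01) +
             (\<integral>\<^sup>+y. ennreal (\<bar>y - (x - 1)\<bar> powr (- p)) \<partial>U01) + (\<integral>\<^sup>+y. ennreal (\<bar>y - (x + 1)\<bar> powr (- p)) \<partial>U01))"
          by (simp add: nn_integral_cmult nn_integral_add)
        also have "\<dots> \<le> ennreal C' * (Jp + Jp + Jp)"
          using x by (intro mult_left_mono add_mono shiftJ) auto
        also have "\<dots> = ennreal (C' * 3 * J)"
          unfolding JJ using C'0 J0 by (simp add: ennreal_mult[symmetric] ennreal_plus[symmetric] del: ennreal_plus)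
        finally show ?thesis .
      qed
      have "ennreal (K \<xi>) = (\<integral>\<^sup>+z. ennreal (k \<xi> (fst z) (snd z)) \<partial>(U01 \<Otimes>\<^sub>M U01))"
        unfolding K_def by (rule nn_integral_eq_integral[OF kint, symmetric]) (simp add: k0)
      also have "\<dots> = (\<integral>\<^sup>+x. (\<integral>\<^sup>+y. ennreal (k \<xi> x y) \<partial>U01) \<partial>U01)"
        by (subst U.nn_integral_fst[symmetric]) (auto simp: split_beta')
      also have "\<dots> \<le> (\<integral>\<^sup>+x. ennreal (C' * 3 * J) \<partial>U01)"
        using AE_U01 by (intro nn_integral_mono_AE) (rule eventually_mono, assumption, rule inner)
      also have "\<dots> = ennreal (C' * 3 * J)" using U.emeasure_space_1 by simp
      finally have "K \<xi> \<le> C' * 3 * J"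
        using C'0 J0 by (subst (asm) ennreal_le_iff) auto
      then show ?thesis unfolding C'_def by (simp add: mult_ac)
    qed
    show ?thesis
      by (rule that[of "Cq * 3 * J"]) (use Cq0 J0 bound in auto)
  qed
  have K1: "K \<xi> \<le> 1" for \<xi>
  proof -
    have "K \<xi> \<le> (\<integral>z. 1 \<partial>(U01 \<Otimes>\<^sub>M U01))"
      unfolding K_def by (intro integral_mono kint) (auto simp: k_def)
    then show ?thesis using UU.prob_space by simp
  qed
  define D where "D = max 1 (sqrt Cst)"
  define G where "G \<xi> = D * (if \<bar>\<xi>\<bar> \<le> 1 then 1 else \<bar>\<xi>\<bar> powr (- q))" for \<xi> :: real
  have S3: "(\<integral>\<^sup>+t. norm (\<phi> t \<xi>) \<partial>GT) \<le> ennreal (G \<xi>)" for \<xi>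
  proof -
    have intn: "integrable GT (\<lambda>t. norm (\<phi> t \<xi>))"
      by (rule T.integrable_const_bound[where B=1]) (auto simp: \<phi>1 \<phi>m1)
    define I where "I = (\<integral>t. norm (\<phi> t \<xi>) \<partial>GT)"
    have I0: "I \<ge> 0" by (simp add: I_def)
    have "I \<le> sqrt (K \<xi>)" using S1[of \<xi>] I0 by (intro real_le_rsqrt) (simp add: I_def)
    also have "sqrt (K \<xi>) \<le> G \<xi>"
    proof (cases "\<bar>\<xi>\<bar> \<le> 1")
      case True
      have "sqrt (K \<xi>) \<le> 1" using K1[of \<xi>] by simp
      also have "1 \<le> G \<xi>" using True unfolding G_def D_def by simp
      finally show ?thesis .
    next
      case False
      then have \<xi>0: "\<xi> \<noteq> 0" by auto
      have "sqrt (K \<xi>) \<le> sqrt (Cst * \<bar>\<xi>\<bar> powr (- 2 * q))" using Cst(2)[OF \<xi>0] by simp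
      also have "\<dots> = sqrt Cst * \<bar>\<xi>\<bar> powr (- q)"
        using \<xi>0 by (simp add: real_sqrt_mult powr_half_sqrt[symmetric] powr_powr)
      also have "\<dots> \<le> D * \<bar>\<xi>\<bar> powr (- q)" unfolding D_def by (intro mult_right_mono) auto
      also have "\<dots> = G \<xi>" using False unfolding G_def by simp
      finally show ?thesis .
    qed
    finally have "I \<le> G \<xi>" .
    moreover have "(\<integral>\<^sup>+t. norm (\<phi> t \<xi>) \<partial>GT) = ennreal I"
      unfolding I_def by (rule nn_integral_eq_integral[OF intn]) auto
    ultimately show ?thesis using ennreal_leI by presburger
  qed
  have S4: "(\<integral>\<^sup>+\<xi>. (\<integral>\<^sup>+t. norm (\<phi> t \<xi>) \<partial>GT) \<partial>lborel) < \<infinity>"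
  proof -
    have "(\<integral>\<^sup>+\<xi>. (\<integral>\<^sup>+t. norm (\<phi> t \<xi>) \<partial>GT) \<partial>lborel) \<le> (\<integral>\<^sup>+\<xi>. ennreal (G \<xi>) \<partial>lborel)"
      by (intro nn_integral_mono S3)
    also have "\<dots> = ennreal D * (\<integral>\<^sup>+\<xi>. ennreal (if \<bar>\<xi>\<bar> \<le> 1 then 1 else \<bar>\<xi>\<bar> powr (- q)) \<partial>lborel)"
      unfolding G_def D_def by (subst nn_integral_cmult[symmetric]) (auto simp: ennreal_mult)
    also have "\<dots> < \<infinity>" using tail_finite[OF q1] by (simp add: ennreal_mult_less_top)
    finally show ?thesis .
  qed
  interpret TL: pair_sigma_finite "GT :: 'a measure" lborel ..
  have "(\<integral>\<^sup>+t. (\<integral>\<^sup>+\<xi>. norm (\<phi> t \<xi>) \<partial>lborel) \<partial>GT) < \<infinity>"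
    using S4 by (subst TL.Fubini'[symmetric]) (auto simp: split_beta')
  then have "AE t in GT. (\<integral>\<^sup>+\<xi>. norm (\<phi> t \<xi>) \<partial>lborel) \<noteq> \<infinity>"
    by (intro nn_integral_PInf_AE) auto
  then have "AE t in lborel. (\<integral>\<^sup>+\<xi>. norm (\<phi> t \<xi>) \<partial>lborel) \<noteq> \<infinity>"
    unfolding GT_def by (subst (asm) AE_density) (auto simp: gdens_pos)
  then show ?thesis
  proof eventually_elim
    case (elim t)
    show "integrable lborel (\<lambda>\<xi>. CLINT x|U01. iexp (\<xi> * (W x + t \<bullet> \<Phi> x)))"
      using elim unfolding \<phi>_def[symmetric] by (intro integrableI_bounded) (auto simp: top.not_eq_extremum)
  qed
qed


lemma distr_lebesgue_on_U01:
  fixes F :: "real \<Rightarrow> real"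
  assumes Fm[measurable]: "F \<in> borel_measurable borel"
  shows "distr (lebesgue_on {0..<1}) lborel F = distr U01 lborel F"
proof (rule measure_eqI)
  show "sets (distr (lebesgue_on {0..<1}) lborel F) = sets (distr U01 lborel F)" by simp
  fix A assume "A \<in> sets (distr (lebesgue_on {0..<1}) lborel F)"
  then have A[measurable]: "A \<in> sets borel" by simp
  have Fl: "F \<in> lebesgue_on {0..<1} \<rightarrow>\<^sub>M lborel"
  proof -
    have "F \<in> borel_measurable lborel" by simp
    then have "F \<in> borel_measurable lebesgue" by (rule measurable_completion)
    then have "F \<in> borel_measurable (lebesgue_on {0..<1})" by (rule measurable_restrict_space1)
    then show ?thesis by (simp add: measurable_lborel1)
  qed
  have B[measurable]: "F -` A \<inter> {0..<1} \<in> sets borel" by measurable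
  have "emeasure (distr (lebesgue_on {0..<1}) lborel F) A = emeasure (lebesgue_on {0..<1}) (F -` A \<inter> {0..<1})"
    by (subst emeasure_distr[OF Fl]) auto
  also have "\<dots> = emeasure lebesgue (F -` A \<inter> {0..<1})"
    by (rule emeasure_restrict_space) auto
  also have "\<dots> = emeasure lborel (F -` A \<inter> {0..<1})"
    using B by (simp add: emeasure_completion main_part_sets)
  also have "\<dots> = emeasure (distr U01 lborel F) A"
  proof -
    have C[measurable]: "F -` A \<in> sets borel" using measurable_sets[OF Fm A] by simp
    have "emeasure (distr U01 lborel F) A = emeasure U01 (F -` A)"
      by (subst emeasure_distr) auto
    also have "\<dots> = (\<integral>\<^sup>+x. indicator {0..<1} x * indicator (F -` A) x \<partial>lborel)"
      unfolding U01_def by (rule emeasure_density) auto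
    also have "\<dots> = (\<integral>\<^sup>+x. indicator (F -` A \<inter> {0..<1}) x \<partial>lborel)"
      by (intro nn_integral_cong) (auto split: split_indicator)
    also have "\<dots> = emeasure lborel (F -` A \<inter> {0..<1})" by simp
    finally show ?thesis by simp
  qed
  finally show "emeasure (distr (lebesgue_on {0..<1}) lborel F) A = emeasure (distr U01 lborel F) A" .
qed

theorem theorem3p2:
  fixes b :: nat and \<alpha> :: real
    and G :: "'d::finite \<Rightarrow> real \<Rightarrow> real" and h :: "real \<Rightarrow> real"
  assumes "b \<ge> 2" and "0 < \<alpha>" and "\<alpha> < 1/2"
    and "\<forall>i. lipschitz_S1 (G i)"
    and "bi_holder \<alpha> (weierstrass_map \<alpha> b G)"
    and "lipschitz_S1 h"
  shows "AE t in (lborel :: (real ^ 'd) measure).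
           \<exists>f :: real \<Rightarrow> real. (\<forall>s. f s \<ge> 0) \<and> continuous_on UNIV f \<and> bounded (range f) \<and>
             distr (lebesgue_on {0..<1}) lborel
               (\<lambda>x. weierstrass \<alpha> b h x + t \<bullet> weierstrass_map \<alpha> b G x)
             = density lborel (\<lambda>s. ennreal (f s))"
proof -
  define W where "W = weierstrass \<alpha> b h"
  define \<Phi> where "\<Phi> = weierstrass_map \<alpha> b G"
  have Wc: "continuous_on UNIV W" unfolding W_def by (rule weierstrass_cont) (use assms in auto)
  have \<Phi>c: "continuous_on UNIV \<Phi>"
    unfolding \<Phi>_def weierstrass_map_def[abs_def]
    by (intro continuous_on_vec_lambda weierstrass_cont) (use assms in auto)
  have Wm[measurable]: "W \<in> borel_measurable borel" by (rule borel_measurable_continuous_onI[OF Wc])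
  have \<Phi>m[measurable]: "\<Phi> \<in> borel_measurable borel" by (rule borel_measurable_continuous_onI[OF \<Phi>c])
  obtain c1 c2 where c1: "c1 > 0" and hold: "\<And>x y. c1 * dist_S1 x y powr \<alpha> \<le> linf_norm (\<Phi> x - \<Phi> y)"
    using assms(5) unfolding bi_holder_def \<Phi>_def by blast
  have low: "\<exists>bb\<in>Basis. c1 * dist_S1 x y powr \<alpha> \<le> \<bar>(\<Phi> x - \<Phi> y) \<bullet> bb\<bar>" for x y
  proof -
    define v where "v = \<Phi> x - \<Phi> y"
    have "linf_norm v \<in> range (\<lambda>i. \<bar>v $ i\<bar>)"
      unfolding linf_norm_def by (rule Max_in) auto
    then obtain i where i: "linf_norm v = \<bar>v $ i\<bar>" by auto
    have "axis i (1::real) \<in> Basis" by simp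
    moreover have "v \<bullet> axis i 1 = v $ i" by (simp add: inner_axis)
    ultimately show ?thesis using hold[of x y] i unfolding v_def by metis
  qed
  have AEi: "AE t in lborel. integrable lborel (\<lambda>\<xi>. CLINT x|U01. iexp (\<xi> * (W x + t \<bullet> \<Phi> x)))"
    by (rule main_estimate[OF Wm \<Phi>m assms(2,3) c1 low])
  then show ?thesis
  proof eventually_elim
    case (elim t)
    define F where "F x = W x + t \<bullet> \<Phi> x" for x
    have Fm[measurable]: "F \<in> borel_measurable borel" unfolding F_def by measurable
    interpret U: prob_space U01 by (rule prob_space_U01)
    have rd: "real_distribution (distr U01 lborel F)"
      unfolding real_distribution_def real_distribution_axioms_def
      by (auto intro!: U.prob_space_distr)
    have ch: "char (distr U01 lborel F) = (\<lambda>\<xi>. CLINT x|U01. iexp (\<xi> * (W x + t \<bullet> \<Phi> x)))"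
      unfolding char_def F_def[symmetric]
      by (intro ext, subst integral_distr) auto
    obtain f where f: "\<forall>s. f s \<ge> 0" "continuous_on UNIV f" "bounded (range f)"
       "distr U01 lborel F = density lborel (\<lambda>s. ennreal (f s))"
      using inversion[OF rd] elim unfolding ch by blast
    have "distr (lebesgue_on {0..<1}) lborel (\<lambda>x. weierstrass \<alpha> b h x + t \<bullet> weierstrass_map \<alpha> b G x)
        = distr U01 lborel F"
      using distr_lebesgue_on_U01[OF Fm] unfolding F_def W_def \<Phi>_def .
    then show ?case using f by auto
  qed
qed


end
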